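(* Let $x\in\mathrm{Modasc}_n$. An entry $x(i)=k>1$ is the leftmost occurrence of the integer $k$ in $x$ if and only if $x(i-1)<x(i)$. In particular, $x$ is a Cayley permutation.
   Context: A Cayley permutation is a word of positive integers in which every integer from $1$ to its maximum occurs. Modified ascent sequences: $\mathrm{Modasc}_0=\{\text{empty word}\}$, $\mathrm{Modasc}_1=\{1\}$; for $n\ge2$, $x\in\mathrm{Modasc}_n$ iff there is $v\in\mathrm{Modasc}_{n-1}$ with last letter $b$ such that either $x=va$ with $1\le a\le b$, or $x=\tilde va$ with $b<a\le2+\mathrm{asc}(v)$, where $\mathrm{asc}(v)=|\{i:v(i)<v(i+1)\}|$ and $\tilde v$ is obtained from $v$ by increasing every entry $c\ge a$ by one. *)

theory Defs
  imports Main
begin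

text \<open>Words of positive integers are lists of naturals; positions are 0-based
  in Isabelle (the paper's x(i) is x ! (i-1)).\<close>

definition asc :: "nat list \<Rightarrow> nat" where
  "asc v = card {i. Suc i < length v \<and> v ! i < v ! Suc i}"

definition tilde :: "nat \<Rightarrow> nat list \<Rightarrow> nat list" where
  "tilde a v = map (\<lambda>c. if a \<le> c then c + 1 else c) v"

fun Modasc :: "nat \<Rightarrow> nat list set" where
  "Modasc 0 = {[]}"
| "Modasc (Suc 0) = {[1]}"
| "Modasc (Suc (Suc n)) =
     {v @ [a] | v a. v \<in> Modasc (Suc n) \<and> 1 \<le> a \<and> a \<le> last v}
   \<union> {tilde a v @ [a] | v a. v \<in> Modasc (Suc n) \<and> last v < a \<and> a \<le> 2 + asc v}"

definition cayley_perm :: "nat list \<Rightarrow> bool" where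
  "cayley_perm x \<longleftrightarrow> (\<exists>m. set x = {1..m})"

end

theory Submission
  imports Defs
begin

definition PP :: "nat list \<Rightarrow> bool" where
  "PP x \<longleftrightarrow> (\<forall>i < length x. 1 < x ! i \<longrightarrow>
            ((\<forall>j < i. x ! j \<noteq> x ! i) \<longleftrightarrow> (0 < i \<and> x ! (i - 1) < x ! i)))"

lemma len_Modasc: "x \<in> Modasc n \<Longrightarrow> length x = n"
  by (induction n arbitrary: x rule: Modasc.induct) (auto simp: tilde_def)

lemma asc_bound:
  assumes P: "PP v" and S: "set v = {1..m}"
  shows "asc v \<le> m - 1"
proof -
  let ?A = "{i. Suc i < length v \<and> v ! i < v ! Suc i}"
  have pos: "\<And>k. k < length v \<Longrightarrow> 1 \<le> v ! k"
    using S nth_mem by fastforce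
  have first: "\<And>i. i \<in> ?A \<Longrightarrow> (\<forall>j < Suc i. v ! j \<noteq> v ! Suc i)"
  proof -
    fix i assume i: "i \<in> ?A"
    then have "1 < v ! Suc i" using pos[of i] by auto
    with P i show "\<forall>j < Suc i. v ! j \<noteq> v ! Suc i" unfolding PP_def by auto
  qed
  have inj: "inj_on (\<lambda>i. v ! Suc i) ?A"
  proof (rule inj_onI)
    fix i j assume i: "i \<in> ?A" and j: "j \<in> ?A" and e: "v ! Suc i = v ! Suc j"
    show "i = j"
    proof (rule ccontr)
      assume "i \<noteq> j"
      then have "i < j \<or> j < i" by auto
      then show False
      proof
        assume "i < j" then show False using first[OF j] e by auto
      next
        assume "j < i" then show False using first[OF i] e by auto
      qed
    qed
  qed
  have img: "(\<lambda>i. v ! Suc i) ` ?A \<subseteq> {2..m}"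
  proof
    fix y assume "y \<in> (\<lambda>i. v ! Suc i) ` ?A"
    then obtain i where i: "i \<in> ?A" and y: "y = v ! Suc i" by auto
    have "v ! Suc i \<in> set v" using i by auto
    then have "v ! Suc i \<le> m" using S by auto
    moreover have "1 < v ! Suc i" using i pos[of i] by auto
    ultimately show "y \<in> {2..m}" using y by auto
  qed
  have "card ?A \<le> card {2..m}"
    by (rule card_inj_on_le[OF inj img]) simp
  then show ?thesis unfolding asc_def by simp
qed

lemma inv_Modasc: "x \<in> Modasc n \<Longrightarrow> PP x \<and> cayley_perm x"
proof (induction n arbitrary: x rule: Modasc.induct)
  case 1
  then show ?case by (auto simp: PP_def cayley_perm_def)
next
  case 2
  then show ?case by (auto simp: PP_def cayley_perm_def intro: exI[of _ 1])
next
  case (3 n)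
  from "3.prems" obtain v a where v: "v \<in> Modasc (Suc n)" and
    cases: "(x = v @ [a] \<and> 1 \<le> a \<and> a \<le> last v) \<or>
            (x = tilde a v @ [a] \<and> last v < a \<and> a \<le> 2 + asc v)"
    by auto
  have IH: "PP v" "cayley_perm v" using "3.IH" v by auto
  have lv: "length v = Suc n" using len_Modasc[OF v] .
  obtain m where S: "set v = {1..m}" using IH(2) unfolding cayley_perm_def by auto
  have lastin: "last v \<in> set v" using lv by (metis last_in_set length_0_conv nat.distinct(1))
  have m1: "1 \<le> m" using S lastin by auto
  have lastv: "last v = v ! n" using lv by (metis diff_Suc_1 last_conv_nth length_0_conv nat.distinct(1))
  show ?case
    using cases
  proof
    assume c: "x = v @ [a] \<and> 1 \<le> a \<and> a \<le> last v"
    have am: "a \<le> m" using c lastin S by auto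
    then have "a \<in> set v" using S c by auto
    then obtain j where j: "j < length v" "v ! j = a" by (auto simp: in_set_conv_nth)
    have "PP x"
      unfolding PP_def
    proof (intro allI impI)
      fix i assume i: "i < length x" and g: "1 < x ! i"
      show "(\<forall>j < i. x ! j \<noteq> x ! i) \<longleftrightarrow> (0 < i \<and> x ! (i - 1) < x ! i)"
      proof (cases "i < length v")
        case True
        then have "\<forall>k\<le>i. x ! k = v ! k" using c by (auto simp: nth_append)
        then show ?thesis using IH(1) True g unfolding PP_def
          by (auto simp: nth_append c)
      next
        case False
        then have ii: "i = length v" using i c by auto
        have "x ! i = a" using ii c by simp
        moreover have "x ! j = a" using j c by (simp add: nth_append)
        moreover have "x ! (i - 1) = last v" using ii c lv lastv by (simp add: nth_append)
        ultimately show ?thesis using j ii c by auto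
      qed
    qed
    moreover have "cayley_perm x" unfolding cayley_perm_def
      using c S am by (auto intro!: exI[of _ m])
    ultimately show ?thesis by simp
  next
    assume c: "x = tilde a v @ [a] \<and> last v < a \<and> a \<le> 2 + asc v"
    define f where "f = (\<lambda>c::nat. if a \<le> c then c + 1 else c)"
    have td: "tilde a v = map f v" unfolding tilde_def f_def by simp
    have a2: "2 \<le> a" using c lastin S by auto
    have am: "a \<le> m + 1" using c asc_bound[OF IH(1) S] m1 by auto
    have fmono: "\<And>p q. f p < f q \<longleftrightarrow> p < q" unfolding f_def by auto
    have finj: "\<And>p q. f p = f q \<longleftrightarrow> p = q" unfolding f_def by auto
    have fa: "\<And>p. f p \<noteq> a" unfolding f_def by auto
    have xo: "\<And>k. k < length v \<Longrightarrow> x ! k = f (v ! k)" using c td by (simp add: nth_append)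
    have pos: "\<And>k. k < length v \<Longrightarrow> 1 \<le> v ! k" using S nth_mem by fastforce
    have f1: "\<And>p. 1 \<le> p \<Longrightarrow> 1 < f p \<longleftrightarrow> 1 < p" unfolding f_def using a2 by auto
    have lx: "length x = Suc (length v)" using c td by simp
    have "PP x"
      unfolding PP_def
    proof (intro allI impI)
      fix i assume i: "i < length x" and g: "1 < x ! i"
      show "(\<forall>j < i. x ! j \<noteq> x ! i) \<longleftrightarrow> (0 < i \<and> x ! (i - 1) < x ! i)"
      proof (cases "i < length v")
        case True
        have g': "1 < v ! i" using g xo[OF True] f1[OF pos[OF True]] by simp
        have e1: "(\<forall>j < i. x ! j \<noteq> x ! i) \<longleftrightarrow> (\<forall>j < i. v ! j \<noteq> v ! i)"
          using True xo finj by auto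
        have e2: "(0 < i \<and> x ! (i - 1) < x ! i) \<longleftrightarrow> (0 < i \<and> v ! (i - 1) < v ! i)"
          using True xo fmono by auto
        show ?thesis using IH(1) True g' e1 e2 unfolding PP_def by auto
      next
        case False
        then have ii: "i = length v" using i lx by auto
        have "x ! i = a" using ii c td by (simp add: nth_append)
        moreover have "\<forall>j<i. x ! j \<noteq> a" using xo fa ii by auto
        moreover have "x ! (i - 1) = f (last v)" using ii lv lastv xo by simp
        moreover have "f (last v) = last v" using c unfolding f_def by auto
        ultimately show ?thesis using ii lv c by auto
      qed
    qed
    moreover have "cayley_perm x" unfolding cayley_perm_def
    proof (intro exI[of _ "m+1"])
      have "set x = f ` {1..m} \<union> {a}" using c td S by auto
      also have "\<dots> = {1..m+1}"
      proof
        show "f ` {1..m} \<union> {a} \<subseteq> {1..m + 1}" using a2 am unfolding f_def by auto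
      next
        show "{1..m + 1} \<subseteq> f ` {1..m} \<union> {a}"
        proof
          fix y assume y: "y \<in> {1..m+1}"
          show "y \<in> f ` {1..m} \<union> {a}"
          proof (cases "y < a")
            case True
            then have "f y = y" "y \<in> {1..m}" using y am unfolding f_def by auto
            then show ?thesis by (metis UnI1 image_eqI)
          next
            case False
            show ?thesis
            proof (cases "y = a")
              case False
              then have "f (y - 1) = y" "y - 1 \<in> {1..m}" using y a2 \<open>\<not> y < a\<close> unfolding f_def by auto
              then show ?thesis by (metis UnI1 image_eqI)
            qed simp
          qed
        qed
      qed
      finally show "set x = {1..m+1}" .
    qed
    ultimately show ?thesis by simp
  qed
qed

theorem lemma2p1:
  fixes x :: "nat list" and n :: nat
  assumes "x \<in> Modasc n"
  shows "(\<forall>i < length x. 1 < x ! i \<longrightarrow>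
            ((\<forall>j < i. x ! j \<noteq> x ! i) \<longleftrightarrow> (0 < i \<and> x ! (i - 1) < x ! i)))
         \<and> cayley_perm x"
  using inv_Modasc[OF assms] unfolding PP_def by simp

end
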